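(* Let $G=K_n$ with $n\ge2$, $F$ regular, $T=F^{-1}(1-1/n)$ and $p=T\cdot(1-1/n)^{n-1}$. Then for every equilibrium $\mathbf{T}'\in\mathcal{N}_{p\cdot\mathbf{1}}$, $$\mathcal{R}(p\cdot\mathbf{1},\mathbf{T}')\ge c\cdot\mathcal{R}(p\cdot\mathbf{1},T\cdot\mathbf{1})$$ for an absolute constant $c>0$ (one may take $c=1/2$).
   Context: Public-goods pricing game on the complete graph $K_n$: buyer $i$'s neighbours are all $j\neq i$. Values i.i.d. with cumulative distribution function $F$, $F(\infty)=1$. An equilibrium for $\mathbf{p}$ is $\mathbf{T}\in[0,\infty]^n$ (buyer $i$ purchases iff $v_i\ge T_i$) with $T_i=p_i/\prod_{j\neq i}F(T_j)$ for all $i$ (convention $c/0=\infty$); $\mathcal{N}_{\mathbf{p}}$ is the set of equilibria; $\mathcal{R}(\mathbf{p},\mathbf{T})=\sum_ip_i(1-F(T_i))$; $p\cdot\mathbf{1}$ is the uniform price vector. $F$ is regular: atomless, supported on an interval in $[0,\infty)$ with positive density $f$ there, and $\phi(x)=x-\frac{1-F(x)}{f(x)}$ non-decreasing. $F^{-1}(q)=\min\{x:F(x)=q\}$. *)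

theory Defs
  imports "HOL-Analysis.Analysis"
begin

definition Fe :: "(real \<Rightarrow> real) \<Rightarrow> ereal \<Rightarrow> real" where
  "Fe F t = (case t of ereal x \<Rightarrow> F x | PInfty \<Rightarrow> 1 | MInfty \<Rightarrow> 0)"

definition ediv :: "real \<Rightarrow> real \<Rightarrow> ereal" where
  "ediv c d = (if d = 0 then PInfty else ereal (c / d))"

text \<open>Regular distribution: atomless (continuous CDF), supported on an interval
  between a \<ge> 0 and b \<le> \<infinity> with positive density f there, and non-decreasing
  virtual value x - (1 - F x)/f x on the support.\<close>
definition regular :: "(real \<Rightarrow> real) \<Rightarrow> bool" where
  "regular F \<longleftrightarrow> (\<exists>f (a::real) (b::ereal).
      0 \<le> a \<and> ereal a < b \<and>
      continuous_on UNIV F \<and>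
      (\<forall>x. x \<le> a \<longrightarrow> F x = 0) \<and>
      (\<forall>x. b \<le> ereal x \<longrightarrow> F x = 1) \<and>
      (F \<longlongrightarrow> 1) at_top \<and>
      (\<forall>x. a < x \<and> ereal x < b \<longrightarrow> (F has_real_derivative f x) (at x) \<and> f x > 0) \<and>
      (\<forall>x y. a < x \<and> x \<le> y \<and> ereal y < b \<longrightarrow>
              x - (1 - F x) / f x \<le> y - (1 - F y) / f y))"

definition Finv :: "(real \<Rightarrow> real) \<Rightarrow> real \<Rightarrow> real" where
  "Finv F q = (LEAST x. F x = q)"

definition equilibria :: "nat \<Rightarrow> (real \<Rightarrow> real) \<Rightarrow> (nat \<Rightarrow> real) \<Rightarrow> (nat \<Rightarrow> ereal) set" where
  "equilibria n F p = {T. \<forall>i<n. 0 \<le> T i \<and>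
       T i = ediv (p i) (\<Prod>j\<in>{..<n} - {i}. Fe F (T j))}"

definition revenue :: "nat \<Rightarrow> (real \<Rightarrow> real) \<Rightarrow> (nat \<Rightarrow> real) \<Rightarrow> (nat \<Rightarrow> ereal) \<Rightarrow> real" where
  "revenue n F p T = (\<Sum>i<n. p i * (1 - Fe F (T i)))"

end

theory Submission
  imports Defs
begin

lemma reg_props:
  assumes "regular F"
  shows "\<exists>a. 0 \<le> a \<and> continuous_on UNIV F \<and> (\<forall>x. x \<le> a \<longrightarrow> F x = 0) \<and>
     (F \<longlongrightarrow> 1) at_top \<and> (\<forall>x y. x \<le> y \<longrightarrow> F x \<le> F y) \<and> (\<forall>x. 0 \<le> F x \<and> F x \<le> 1)"
proof -
  obtain f a b where a0: "0 \<le> a" and ab: "ereal a < b" and cont: "continuous_on UNIV F"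
    and low: "\<forall>x. x \<le> a \<longrightarrow> F x = 0" and up: "\<forall>x. b \<le> ereal x \<longrightarrow> F x = 1"
    and lim: "(F \<longlongrightarrow> 1) at_top"
    and der: "\<forall>x. a < x \<and> ereal x < b \<longrightarrow> (F has_real_derivative f x) (at x) \<and> f x > 0"
    using assms unfolding regular_def by blast
  have inc: "F x \<le> F y" if "a \<le> x" "x \<le> y" "ereal y \<le> b" for x y
  proof (rule DERIV_nonneg_imp_increasing_open[OF that(2)])
    fix z assume "x < z" "z < y"
    hence "a < z" "ereal z < b" using that by (auto intro: less_le_trans[of _ "ereal y"])
    thus "\<exists>d. (F has_real_derivative d) (at z) \<and> 0 \<le> d" using der by (meson less_le)
  next
    show "continuous_on {x..y} F" using cont continuous_on_subset by blast
  qed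
  have nonneg: "0 \<le> F x" for x
  proof (cases "x \<le> a")
    case True thus ?thesis using low by simp
  next
    case False
    show ?thesis
    proof (cases "b \<le> ereal x")
      case True thus ?thesis using up by simp
    next
      case False2: False
      have "F a \<le> F x" using inc[of a x] False False2 by auto
      thus ?thesis using low by simp
    qed
  qed
  have le1: "F x \<le> 1" for x
  proof (cases "b \<le> ereal x")
    case True thus ?thesis using up by simp
  next
    case False
    show ?thesis
    proof (cases "x \<le> a")
      case True thus ?thesis using low by simp
    next
      case F2: False
      have ev: "\<forall>\<^sub>F y in at_top. F x \<le> F y"
        using eventually_ge_at_top[of x]
      proof (rule eventually_mono)
        fix y assume "x \<le> y"
        show "F x \<le> F y"
        proof (cases "b \<le> ereal y")
          case True
          then obtain c where c: "b = ereal c" using ab by (cases b) auto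
          have "F x \<le> F c" using inc[of x c] F2 False c by auto
          also have "F c = 1" using up c by simp
          also have "\<dots> = F y" using up True by simp
          finally show ?thesis .
        next
          case False thus ?thesis using inc[of x y] F2 \<open>x \<le> y\<close> by auto
        qed
      qed
      show ?thesis by (rule tendsto_lowerbound[OF lim ev]) simp
    qed
  qed
  have mono: "F x \<le> F y" if "x \<le> y" for x y
  proof (cases "x \<le> a")
    case True thus ?thesis using low nonneg by simp
  next
    case False
    show ?thesis
    proof (cases "b \<le> ereal y")
      case True thus ?thesis using up le1 by simp
    next
      case False2: False
      show ?thesis using inc[of x y] False False2 that by auto
    qed
  qed
  show ?thesis using a0 cont low lim mono nonneg le1 by blast
qed

lemma Finv_props:
  assumes "regular F" "0 < c" "c < 1"
  shows "F (Finv F c) = c \<and> 0 \<le> Finv F c"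
proof -
  obtain a where a0: "0 \<le> a" and cont: "continuous_on UNIV F" and low: "\<forall>x. x \<le> a \<longrightarrow> F x = 0"
    and lim: "(F \<longlongrightarrow> 1) at_top"
    using reg_props[OF assms(1)] by blast
  have "\<forall>\<^sub>F x in at_top. F x > c" using order_tendstoD(1)[OF lim assms(3)] .
  then obtain z where z: "\<And>x. x \<ge> z \<Longrightarrow> F x > c" by (auto simp: eventually_at_top_linorder)
  define z' where "z' = max z a"
  have "F a \<le> c" "c \<le> F z'" "a \<le> z'" using low z[of z'] assms by (auto simp: z'_def)
  then obtain x where x: "F x = c" using IVT'[of F a c z'] cont continuous_on_subset by blast
  define S where "S = {x. F x = c}"
  have cl: "closed S" unfolding S_def
    using continuous_closed_preimage_constant[OF cont closed_UNIV, of c] by simp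
  have bdd: "bdd_below S" unfolding S_def bdd_below_def
    by (rule exI[of _ a]) (metis assms(2) low linorder_le_cases mem_Collect_eq less_irrefl)
  have ne: "S \<noteq> {}" using x S_def by auto
  have inS: "Inf S \<in> S" by (rule closed_contains_Inf[OF ne bdd cl])
  have eq: "Finv F c = Inf S" unfolding Finv_def
  proof (rule Least_equality)
    show "F (Inf S) = c" using inS S_def by simp
    fix y assume "F y = c" then have "y \<in> S" by (simp add: S_def)
    thus "Inf S \<le> y" by (rule cInf_lower[OF _ bdd])
  qed
  have "F (Finv F c) = c" using inS eq S_def by simp
  moreover have "a \<le> Finv F c"
  proof (rule ccontr)
    assume "\<not> a \<le> Finv F c" then have "F (Finv F c) = 0" using low by simp
    thus False using calculation assms by simp
  qed
  ultimately show ?thesis using a0 by simp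
qed

lemma prod_ge:
  fixes q :: "nat \<Rightarrow> real"
  assumes "finite I" "\<And>i. i \<in> I \<Longrightarrow> 0 \<le> q i \<and> q i \<le> 1"
  shows "(\<Prod>i\<in>I. q i) \<ge> 1 - (\<Sum>i\<in>I. 1 - q i)"
  using assms
proof (induction I rule: finite_induct)
  case empty then show ?case by simp
next
  case (insert j I)
  let ?P = "\<Prod>i\<in>I. q i" and ?s = "\<Sum>i\<in>I. 1 - q i"
  have P: "?P \<ge> 1 - ?s" using insert by auto
  have q: "0 \<le> q j" "q j \<le> 1" using insert by auto
  have s: "?s \<ge> 0" using insert by (intro sum_nonneg) auto
  have "q j * ?P \<ge> q j * (1 - ?s)" using mult_left_mono[OF P q(1)] .
  moreover have "q j * (1 - ?s) \<ge> 1 - ?s - (1 - q j)"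
    using mult_right_mono[OF q(2) s] by (simp add: algebra_simps)
  ultimately show ?case using insert by simp
qed

lemma pow_half:
  assumes "n \<ge> (2::nat)"
  shows "(1 - 1 / real n) ^ (n - 1) \<le> 1 / 2"
proof -
  define m where "m = n - 1"
  have m: "m \<ge> 1" "real n = real m + 1" using assms by (auto simp: m_def)
  have "1 + real m * (1 / real m) \<le> (1 + 1 / real m) ^ m"
    by (rule Bernoulli_inequality) (use m in \<open>auto intro: order_trans[of _ 0]\<close>)
  hence B: "2 \<le> (1 + 1 / real m) ^ m" using m by simp
  have eq: "1 - 1 / real n = 1 / (1 + 1 / real m)" using m by (simp add: field_simps)
  have "(1 - 1 / real n) ^ (n - 1) = 1 / (1 + 1 / real m) ^ m"
    unfolding eq m_def by (simp add: power_one_over)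
  also have "\<dots> \<le> 1 / 2" using B by (intro divide_left_mono) auto
  finally show ?thesis .
qed


theorem lemma3p4:
  fixes n :: nat and F :: "real \<Rightarrow> real" and T' :: "nat \<Rightarrow> ereal"
  assumes "n \<ge> 2"
    and "regular F"
    and "T' \<in> equilibria n F (\<lambda>_. Finv F (1 - 1 / real n) * (1 - 1 / real n) ^ (n - 1))"
  shows "revenue n F (\<lambda>_. Finv F (1 - 1 / real n) * (1 - 1 / real n) ^ (n - 1)) T'
         \<ge> 1 / 2 * revenue n F (\<lambda>_. Finv F (1 - 1 / real n) * (1 - 1 / real n) ^ (n - 1))
                     (\<lambda>_. ereal (Finv F (1 - 1 / real n)))"
proof -
  define T where "T = Finv F (1 - 1 / real n)"
  define p where "p = T * (1 - 1 / real n) ^ (n - 1)"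
  have n: "real n \<ge> 2" using assms(1) by simp
  have c: "0 < 1 - 1 / real n" "1 - 1 / real n < 1" using n by (auto simp: field_simps)
  have FT: "F T = 1 - 1 / real n" and T0: "0 \<le> T"
    using Finv_props[OF assms(2) c] T_def by auto
  obtain a where mono: "\<And>x y. x \<le> y \<Longrightarrow> F x \<le> F y" and F01: "\<And>x. 0 \<le> F x \<and> F x \<le> 1"
    using reg_props[OF assms(2)] by blast
  have ph: "(1 - 1 / real n) ^ (n - 1) \<le> 1 / 2" by (rule pow_half[OF assms(1)])
  have p0: "0 \<le> p" unfolding p_def using T0 c by simp
  have p2: "2 * p \<le> T" unfolding p_def using mult_left_mono[OF ph T0] by simp
  define q where "q i = Fe F (T' i)" for i
  have eqT: "\<And>i. i < n \<Longrightarrow> 0 \<le> T' i \<and> T' i = ediv p (\<Prod>j\<in>{..<n} - {i}. q j)"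
  proof -
    fix i assume "i < n"
    then have "0 \<le> T' i \<and> T' i = ediv p (\<Prod>j\<in>{..<n} - {i}. Fe F (T' j))"
      using assms(3) unfolding equilibria_def p_def T_def by blast
    then show "0 \<le> T' i \<and> T' i = ediv p (\<Prod>j\<in>{..<n} - {i}. q j)" unfolding q_def .
  qed
  have q01: "0 \<le> q i \<and> q i \<le> 1" if "i < n" for i
  proof -
    have "0 \<le> T' i" using eqT that by blast
    thus ?thesis unfolding q_def Fe_def using F01 by (cases "T' i") auto
  qed
  have RHS: "revenue n F (\<lambda>_. p) (\<lambda>_. ereal T) = p"
  proof -
    have "revenue n F (\<lambda>_. p) (\<lambda>_. ereal T) = real n * (p * (1 / real n))"
      unfolding revenue_def Fe_def using FT by simp
    also have "\<dots> = p" using n by simp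
    finally show ?thesis .
  qed
  have LHS: "revenue n F (\<lambda>_. p) T' = p * (\<Sum>i<n. 1 - q i)"
    unfolding revenue_def q_def by (simp add: sum_distrib_left)
  have S: "(\<Sum>i<n. 1 - q i) \<ge> 1 / 2"
  proof (rule ccontr)
    assume A: "\<not> ?thesis"
    have Pall: "(\<Prod>i<n. q i) > 1 / 2"
      using prod_ge[of "{..<n}" q] q01 A by auto
    have small: "q i \<le> 1 - 1 / real n" if i: "i < n" for i
    proof -
      have "(\<Prod>j<n. q j) = q i * (\<Prod>j\<in>{..<n} - {i}. q j)"
        using i by (simp add: prod.remove)
      also have "\<dots> \<le> (\<Prod>j\<in>{..<n} - {i}. q j)"
        using q01[OF i] by (intro mult_left_le_one_le prod_nonneg) (use q01 in auto)
      finally have Q: "(\<Prod>j\<in>{..<n} - {i}. q j) > 1 / 2" using Pall by simp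
      then have Ti: "T' i = ereal (p / (\<Prod>j\<in>{..<n} - {i}. q j))"
      proof -
        have "(\<Prod>j\<in>{..<n} - {i}. q j) \<noteq> 0" using Q by linarith
        thus ?thesis using eqT[OF i] unfolding ediv_def by presburger
      qed
      have "p / (\<Prod>j\<in>{..<n} - {i}. q j) \<le> p / (1 / 2)"
        using Q p0 by (intro divide_left_mono) auto
      also have "\<dots> \<le> T" using p2 by simp
      finally have "q i \<le> F T" unfolding q_def Ti Fe_def using mono by simp
      thus ?thesis using FT by simp
    qed
    have "(\<Sum>i<n. 1 - q i) \<ge> (\<Sum>i<n. 1 / real n)"
      by (rule sum_mono) (use small in \<open>fastforce simp: algebra_simps\<close>)
    also have "(\<Sum>i<n. 1 / real n) = 1" using n by simp
    finally show False using A by simp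
  qed
  have "p * (1 / 2) \<le> p * (\<Sum>i<n. 1 - q i)" using mult_left_mono[OF S p0] .
  thus ?thesis using LHS RHS unfolding p_def T_def by simp
qed

end
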